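(* Let $G=(V,E)$ be a finite simple graph with at least one edge and no isolated vertices, let $\overline{\deg}=\frac1{|V|}\sum_{v\in V}\deg v$ be its average degree, let $\lambda_N$ be the largest eigenvalue of its normalized Laplacian (so $\lambda_N>1$), and let $d\ge0$ be an integer. Then \[ \chi^d(G)\;\ge\;\frac{\lambda_N}{\lambda_N-1+d/\overline{\deg}}. \] Moreover, the bound is sharp: there exist graphs (and values of $d$) for which equality holds.
   Context: For a graph $G$ with adjacency matrix $A$ ($A_{v,w}=1$ if $v\sim w$, else $0$) and degree matrix $D=\mathrm{diag}(\deg v)$, the normalized Laplacian is $L=\mathrm{Id}-D^{-1}A$, with real eigenvalues $0=\lambda_1\le\dots\le\lambda_N$. For an integer $d\ge0$, a vertex coloring $V\to\{1,\dots,k\}$ is $d$-improper if every vertex has at most $d$ neighbors with the same color as itself; $\chi^d(G)$ is the least $k$ admitting a $d$-improper $k$-coloring. *)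

theory Defs
  imports Complex_Main
begin

definition simple_graph :: "'a set \<Rightarrow> ('a \<Rightarrow> 'a \<Rightarrow> bool) \<Rightarrow> bool" where
  "simple_graph V E \<longleftrightarrow> finite V \<and> (\<forall>v w. E v w \<longrightarrow> E w v)
     \<and> (\<forall>v. \<not> E v v) \<and> (\<forall>v w. E v w \<longrightarrow> v \<in> V \<and> w \<in> V)"

definition neighbours :: "'a set \<Rightarrow> ('a \<Rightarrow> 'a \<Rightarrow> bool) \<Rightarrow> 'a \<Rightarrow> 'a set" where
  "neighbours V E v = {w \<in> V. E v w}"

definition gdeg :: "'a set \<Rightarrow> ('a \<Rightarrow> 'a \<Rightarrow> bool) \<Rightarrow> 'a \<Rightarrow> nat" where
  "gdeg V E v = card (neighbours V E v)"

definition has_edge :: "'a set \<Rightarrow> ('a \<Rightarrow> 'a \<Rightarrow> bool) \<Rightarrow> bool" where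
  "has_edge V E \<longleftrightarrow> (\<exists>v\<in>V. \<exists>w\<in>V. E v w)"

definition no_isolated :: "'a set \<Rightarrow> ('a \<Rightarrow> 'a \<Rightarrow> bool) \<Rightarrow> bool" where
  "no_isolated V E \<longleftrightarrow> (\<forall>v\<in>V. gdeg V E v > 0)"

definition avg_deg :: "'a set \<Rightarrow> ('a \<Rightarrow> 'a \<Rightarrow> bool) \<Rightarrow> real" where
  "avg_deg V E = (\<Sum>v\<in>V. real (gdeg V E v)) / real (card V)"

definition norm_laplacian :: "'a set \<Rightarrow> ('a \<Rightarrow> 'a \<Rightarrow> bool) \<Rightarrow> ('a \<Rightarrow> real) \<Rightarrow> 'a \<Rightarrow> real" where
  "norm_laplacian V E f v =
     f v - (\<Sum>w\<in>V. (if E v w then 1 else 0) * f w) / real (gdeg V E v)"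

text \<open>Eigenvalues of L (all eigenvalues of L are real, with real eigenvectors).\<close>
definition laplacian_eigenvalue :: "'a set \<Rightarrow> ('a \<Rightarrow> 'a \<Rightarrow> bool) \<Rightarrow> real \<Rightarrow> bool" where
  "laplacian_eigenvalue V E mu \<longleftrightarrow>
     (\<exists>f. (\<exists>v\<in>V. f v \<noteq> 0) \<and> (\<forall>v\<in>V. norm_laplacian V E f v = mu * f v))"

definition lambda_max :: "'a set \<Rightarrow> ('a \<Rightarrow> 'a \<Rightarrow> bool) \<Rightarrow> real" where
  "lambda_max V E = Max {mu. laplacian_eigenvalue V E mu}"

definition improper_coloring :: "'a set \<Rightarrow> ('a \<Rightarrow> 'a \<Rightarrow> bool) \<Rightarrow> nat \<Rightarrow> nat \<Rightarrow> ('a \<Rightarrow> nat) \<Rightarrow> bool" where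
  "improper_coloring V E d k c \<longleftrightarrow>
     (\<forall>v\<in>V. c v \<in> {1..k}) \<and> (\<forall>v\<in>V. card {w \<in> V. E v w \<and> c w = c v} \<le> d)"

definition improper_chromatic :: "'a set \<Rightarrow> ('a \<Rightarrow> 'a \<Rightarrow> bool) \<Rightarrow> nat \<Rightarrow> nat" where
  "improper_chromatic V E d = (LEAST k. \<exists>c. improper_coloring V E d k c)"

end

theory Submission
  imports Defs "HOL-Analysis.Analysis"
begin

lemma cont_coord [continuous_intros]: "continuous_on S (\<lambda>f::'a \<Rightarrow> real. f i)"
  by (rule continuous_on_subset[OF continuous_on_product_coordinates]) simp

lemma compact_PiE_UNIV:
  fixes S :: "'a \<Rightarrow> real set"
  assumes "\<And>i. compact (S i)"
  shows "compact (Pi\<^sub>E UNIV S)"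
proof -
  have "compactin (product_topology (\<lambda>i. euclidean) UNIV) (Pi\<^sub>E UNIV S)"
    using assms by (simp add: compactin_PiE)
  then show ?thesis by (simp add: euclidean_product_topology)
qed

lemma quad_nonpos_lin_zero:
  fixes a b :: real
  assumes "\<And>t. 2 * t * b + t^2 * a \<le> 0"
  shows "b = 0"
proof (rule ccontr)
  assume "b \<noteq> 0"
  define t where "t = b / (\<bar>a\<bar> + 1)"
  have p: "\<bar>a\<bar> + 1 > 0" by simp
  have gen: "\<And>s. s > 0 \<Longrightarrow> 2 * (b/s) * b + (b/s)^2 * a = b^2 / s^2 * (2 * s + a)"
    by (simp add: field_simps power2_eq_square)
  have "2 * t * b + t^2 * a = b^2 / (\<bar>a\<bar> + 1)^2 * (2 * (\<bar>a\<bar> + 1) + a)"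
    unfolding t_def using gen[OF p] .
  moreover have "b^2 / (\<bar>a\<bar> + 1)^2 > 0" using \<open>b \<noteq> 0\<close> p by simp
  moreover have "2 * (\<bar>a\<bar> + 1) + a > 0" by (auto simp: abs_if)
  ultimately have "2 * t * b + t^2 * a > 0" by (metis mult_pos_pos)
  with assms show False by (meson not_le)
qed

locale sgraph =
  fixes V :: "'a set" and E :: "'a \<Rightarrow> 'a \<Rightarrow> bool"
  assumes sg: "simple_graph V E" and noiso: "no_isolated V E"
begin

definition adj :: "'a \<Rightarrow> 'a \<Rightarrow> real" where "adj v w = (if E v w then 1 else 0)"
definition dg :: "'a \<Rightarrow> real" where "dg v = real (gdeg V E v)"
definition Qf :: "('a \<Rightarrow> real) \<Rightarrow> real" where
  "Qf f = (\<Sum>v\<in>V. \<Sum>w\<in>V. adj v w * (f v - f w)^2)"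
definition Nf :: "('a \<Rightarrow> real) \<Rightarrow> real" where
  "Nf f = (\<Sum>v\<in>V. dg v * (f v)^2)"
definition ip :: "('a \<Rightarrow> real) \<Rightarrow> ('a \<Rightarrow> real) \<Rightarrow> real" where
  "ip f g = (\<Sum>v\<in>V. dg v * f v * g v)"
definition EV :: "real \<Rightarrow> ('a \<Rightarrow> real) \<Rightarrow> bool" where
  "EV mu f \<longleftrightarrow> (\<forall>v\<in>V. dg v * f v - (\<Sum>w\<in>V. adj v w * f w) = mu * (dg v * f v))"

lemma finV: "finite V" using sg by (simp add: simple_graph_def)
lemma symE: "E v w \<Longrightarrow> E w v" using sg by (simp add: simple_graph_def)
lemma irrE: "\<not> E v v" using sg by (simp add: simple_graph_def)
lemma adj_sym: "adj v w = adj w v" unfolding adj_def using symE by auto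
lemma adj_nonneg: "adj v w \<ge> 0" unfolding adj_def by auto

lemma dg_pos: "v \<in> V \<Longrightarrow> dg v \<ge> 1"
  using noiso unfolding no_isolated_def dg_def by (simp add: Suc_le_eq)

lemma dg_sum: "v \<in> V \<Longrightarrow> dg v = (\<Sum>w\<in>V. adj v w)"
proof -
  have "(\<Sum>w\<in>V. adj v w) = (\<Sum>w\<in>{w\<in>V. E v w}. 1)"
    unfolding adj_def using finV by (simp add: sum.If_cases Int_def)
  then show ?thesis unfolding dg_def gdeg_def neighbours_def by simp
qed

lemma Nf_nonneg: "Nf f \<ge> 0"
  unfolding Nf_def using dg_pos by (intro sum_nonneg) (simp add: order.trans[OF zero_le_one])

lemma Qf_nonneg: "Qf f \<ge> 0"
  unfolding Qf_def by (intro sum_nonneg) (simp add: adj_nonneg)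

lemma Nf_zero: "Nf f = 0 \<Longrightarrow> v \<in> V \<Longrightarrow> f v = 0"
proof -
  assume "Nf f = 0" "v \<in> V"
  have nn: "\<forall>x\<in>V. dg x * (f x)^2 \<ge> 0" using dg_pos
    by (simp add: order.trans[OF zero_le_one])
  then have "\<forall>x\<in>V. dg x * (f x)^2 = 0"
    using \<open>Nf f = 0\<close> finV unfolding Nf_def by (simp add: sum_nonneg_eq_0_iff)
  then have "dg v * (f v)^2 = 0" using \<open>v \<in> V\<close> by blast
  then show "f v = 0" using dg_pos[OF \<open>v \<in> V\<close>] by simp
qed

lemma Qf_zero_if: "(\<And>v. v \<in> V \<Longrightarrow> f v = 0) \<Longrightarrow> Qf f = 0"
  unfolding Qf_def by simp

lemma Qf_scale: "Qf (\<lambda>v. c * f v) = c^2 * Qf f"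
  unfolding Qf_def by (simp add: sum_distrib_left power2_eq_square algebra_simps)

lemma Nf_scale: "Nf (\<lambda>v. c * f v) = c^2 * Nf f"
  unfolding Nf_def by (simp add: sum_distrib_left power2_eq_square algebra_simps)

lemma Qf_cong: "(\<And>v. v \<in> V \<Longrightarrow> f v = g v) \<Longrightarrow> Qf f = Qf g"
  unfolding Qf_def by simp
lemma Nf_cong: "(\<And>v. v \<in> V \<Longrightarrow> f v = g v) \<Longrightarrow> Nf f = Nf g"
  unfolding Nf_def by simp

definition Q2 where "Q2 f u = (\<Sum>v\<in>V. \<Sum>w\<in>V. adj v w * ((f v - f w) * (u v - u w)))"

lemma Qf_expand: "Qf (\<lambda>v. f v + t * u v) = Qf f + 2 * t * Q2 f u + t^2 * Qf u"
proof -
  have "\<And>v w. adj v w * ((f v + t * u v) - (f w + t * u w))^2 =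
     adj v w * (f v - f w)^2 + 2 * t * (adj v w * ((f v - f w) * (u v - u w))) + t^2 * (adj v w * (u v - u w)^2)"
    by (simp add: power2_eq_square algebra_simps)
  then show ?thesis unfolding Qf_def Q2_def by (simp add: sum.distrib sum_distrib_left)
qed

lemma Nf_expand: "Nf (\<lambda>v. f v + t * u v) = Nf f + 2 * t * ip f u + t^2 * Nf u"
proof -
  have "\<And>v. dg v * (f v + t * u v)^2 = dg v * (f v)^2 + 2 * t * (dg v * f v * u v) + t^2 * (dg v * (u v)^2)"
    by (simp add: power2_eq_square algebra_simps)
  then show ?thesis unfolding Nf_def ip_def by (simp add: sum.distrib sum_distrib_left)
qed

lemma Q2_delta:
  assumes "x \<in> V"
  shows "Q2 f (\<lambda>v. if v = x then 1 else 0) = 2 * (dg x * f x - (\<Sum>w\<in>V. adj x w * f w))"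
proof -
  let ?u = "\<lambda>v. if v = x then 1 else (0::real)"
  have "Q2 f ?u = (\<Sum>v\<in>V. \<Sum>w\<in>V. adj v w * (f v - f w) * ?u v) - (\<Sum>v\<in>V. \<Sum>w\<in>V. adj v w * (f v - f w) * ?u w)"
    unfolding Q2_def by (simp add: sum_subtractf[symmetric] algebra_simps)
  also have "(\<Sum>v\<in>V. \<Sum>w\<in>V. adj v w * (f v - f w) * ?u v) = (\<Sum>v\<in>V. if v = x then (\<Sum>w\<in>V. adj v w * (f v - f w)) else 0)"
    by (rule sum.cong[OF refl]) (simp add: sum_distrib_right[symmetric])
  also have "\<dots> = (\<Sum>w\<in>V. adj x w * (f x - f w))"
    using assms finV by (simp add: sum.delta)
  also have "(\<Sum>v\<in>V. \<Sum>w\<in>V. adj v w * (f v - f w) * ?u w) = (\<Sum>w\<in>V. \<Sum>v\<in>V. adj v w * (f v - f w) * ?u w)"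
    by (rule sum.swap)
  also have "\<dots> = (\<Sum>w\<in>V. if w = x then (\<Sum>v\<in>V. adj v w * (f v - f w)) else 0)"
    by (rule sum.cong[OF refl]) (simp add: sum_distrib_right[symmetric])
  also have "\<dots> = (\<Sum>v\<in>V. adj v x * (f v - f x))"
    using assms finV by (simp add: sum.delta)
  also have "\<dots> = - (\<Sum>w\<in>V. adj x w * (f x - f w))"
    by (simp add: adj_sym sum_negf[symmetric] algebra_simps)
  finally have "Q2 f ?u = 2 * (\<Sum>w\<in>V. adj x w * (f x - f w))" by simp
  also have "(\<Sum>w\<in>V. adj x w * (f x - f w)) = dg x * f x - (\<Sum>w\<in>V. adj x w * f w)"
    using dg_sum[OF assms] by (simp add: algebra_simps sum_subtractf sum_distrib_left)
  finally show ?thesis .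
qed

lemma ip_delta: "x \<in> V \<Longrightarrow> ip f (\<lambda>v. if v = x then 1 else 0) = dg x * f x"
  unfolding ip_def using finV by (simp add: if_distrib cong: if_cong)

lemma EV_imp_eig:
  assumes "EV mu f" "\<exists>v\<in>V. f v \<noteq> 0"
  shows "laplacian_eigenvalue V E mu"
  unfolding laplacian_eigenvalue_def
proof (intro exI conjI ballI)
  show "\<exists>v\<in>V. f v \<noteq> 0" by fact
  fix v assume v: "v \<in> V"
  have d: "dg v > 0" using dg_pos[OF v] by linarith
  have e: "dg v * f v - (\<Sum>w\<in>V. adj v w * f w) = mu * (dg v * f v)"
    using assms(1) v unfolding EV_def by blast
  have "norm_laplacian V E f v = f v - (\<Sum>w\<in>V. adj v w * f w) / dg v"
    unfolding norm_laplacian_def adj_def dg_def by simp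
  also have "\<dots> = mu * f v" using d e by (simp add: field_simps)
  finally show "norm_laplacian V E f v = mu * f v" .
qed

lemma eig_imp_EV:
  assumes "laplacian_eigenvalue V E mu"
  shows "\<exists>f. EV mu f \<and> (\<exists>v\<in>V. f v \<noteq> 0)"
proof -
  obtain f where f: "\<exists>v\<in>V. f v \<noteq> 0" "\<forall>v\<in>V. norm_laplacian V E f v = mu * f v"
    using assms unfolding laplacian_eigenvalue_def by blast
  have "EV mu f" unfolding EV_def
  proof
    fix v assume v: "v \<in> V"
    have d: "dg v > 0" using dg_pos[OF v] by linarith
    have "norm_laplacian V E f v = f v - (\<Sum>w\<in>V. adj v w * f w) / dg v"
      unfolding norm_laplacian_def adj_def dg_def by simp
    then have "f v - (\<Sum>w\<in>V. adj v w * f w) / dg v = mu * f v" using f(2) v by simp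
    then show "dg v * f v - (\<Sum>w\<in>V. adj v w * f w) = mu * (dg v * f v)"
      using d by (simp add: field_simps)
  qed
  then show ?thesis using f(1) by blast
qed

lemma cont_Nf: "continuous_on S Nf"
  unfolding Nf_def by (intro continuous_intros)

lemma cont_Qf: "continuous_on S Qf"
  unfolding Qf_def by (intro continuous_intros)

lemma rayleigh_max:
  assumes "V \<noteq> {}"
  shows "\<exists>m. laplacian_eigenvalue V E (m/2) \<and> m \<ge> 0 \<and> (\<forall>g. Qf g \<le> m * Nf g)"
proof -
  define S where "S = (\<lambda>v. if v \<in> V then {-1..1} else {0::real})"
  define K where "K = Pi\<^sub>E UNIV S \<inter> {f. Nf f = 1}"
  have cK: "compact K" unfolding K_def
  proof (rule compact_Int_closed)
    show "compact (Pi\<^sub>E UNIV S)" by (rule compact_PiE_UNIV) (simp add: S_def)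
    show "closed {f. Nf f = 1}" by (rule closed_Collect_eq) (auto simp: cont_Nf)
  qed
  obtain x where x: "x \<in> V" using assms by blast
  have dx: "dg x \<ge> 1" using dg_pos[OF x] .
  define e where "e = (\<lambda>v. if v = x then 1 / sqrt (dg x) else 0)"
  have "Nf e = dg x * (1 / sqrt (dg x))^2"
  proof -
    have eq: "(\<lambda>v. dg v * (e v)^2) = (\<lambda>v. if v = x then dg x * (1 / sqrt (dg x))^2 else 0)"
      by (auto simp: e_def)
    show ?thesis unfolding Nf_def eq using finV x by (simp only: sum.delta if_True)
  qed
  also have "\<dots> = 1" using dx by (simp add: power_divide)
  finally have "Nf e = 1" .
  moreover have "e \<in> Pi\<^sub>E UNIV S"
  proof -
    have "1 / sqrt (dg x) \<le> 1" using dx by simp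
    moreover have "0 \<le> 1 / sqrt (dg x)" using dx by simp
    ultimately have "-1 \<le> 1 / sqrt (dg x)" "1 / sqrt (dg x) \<le> 1" by linarith+
    then show ?thesis unfolding e_def S_def using x by (auto simp: PiE_iff)
  qed
  ultimately have "K \<noteq> {}" unfolding K_def by blast
  then obtain f0 where f0K: "f0 \<in> K" and f0max: "\<forall>y\<in>K. Qf y \<le> Qf f0"
    using continuous_attains_sup[OF cK _ cont_Qf] by blast
  define m where "m = Qf f0"
  have m0: "m \<ge> 0" unfolding m_def by (rule Qf_nonneg)
  have Nf0: "Nf f0 = 1" using f0K unfolding K_def by simp
  have claim1: "Qf g \<le> m * Nf g" for g
  proof (cases "Nf g = 0")
    case True
    then have "Qf g = 0" using Nf_zero Qf_zero_if by blast
    then show ?thesis using True by simp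
  next
    case False
    then have Np: "Nf g > 0" using Nf_nonneg[of g] by linarith
    define s where "s = 1 / sqrt (Nf g)"
    define h where "h = (\<lambda>v. if v \<in> V then s * g v else 0)"
    have s2: "s^2 = 1 / Nf g" unfolding s_def using Np by (simp add: power_divide)
    have Nh: "Nf h = 1"
    proof -
      have "Nf h = Nf (\<lambda>v. s * g v)" by (rule Nf_cong) (simp add: h_def)
      also have "\<dots> = s^2 * Nf g" by (rule Nf_scale)
      finally show ?thesis using s2 Np by simp
    qed
    have "h \<in> Pi\<^sub>E UNIV S"
    proof -
      have "h v \<in> S v" for v
      proof (cases "v \<in> V")
        case True
        have "dg v * (h v)^2 \<le> Nf h" unfolding Nf_def
          using True finV by (intro member_le_sum) (auto simp: dg_def)
        then have "dg v * (h v)^2 \<le> 1" using Nh by simp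
        moreover have "(h v)^2 \<le> dg v * (h v)^2" using dg_pos[OF True]
          by (simp add: mult_le_cancel_right1)
        ultimately have "(h v)^2 \<le> 1" by linarith
        then have "\<bar>h v\<bar> \<le> 1" by (simp add: abs_square_le_1)
        then show ?thesis using True unfolding S_def by auto
      next
        case False
        then show ?thesis unfolding S_def h_def by simp
      qed
      then show ?thesis by (simp add: PiE_iff)
    qed
    then have "h \<in> K" using Nh unfolding K_def by simp
    then have "Qf h \<le> m" using f0max unfolding m_def by blast
    moreover have "Qf h = s^2 * Qf g"
    proof -
      have "Qf h = Qf (\<lambda>v. s * g v)" by (rule Qf_cong) (simp add: h_def)
      also have "\<dots> = s^2 * Qf g" by (rule Qf_scale)
      finally show ?thesis .
    qed
    ultimately have "Qf g / Nf g \<le> m" using s2 by simp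
    then show ?thesis using Np by (simp add: divide_le_eq mult.commute)
  qed
  have "EV (m/2) f0" unfolding EV_def
  proof
    fix y assume y: "y \<in> V"
    define u where "u = (\<lambda>v. if v = y then 1 else (0::real))"
    have "2 * t * (Q2 f0 u - m * ip f0 u) + t^2 * (Qf u - m * Nf u) \<le> 0" for t
    proof -
      have "Qf (\<lambda>v. f0 v + t * u v) \<le> m * Nf (\<lambda>v. f0 v + t * u v)" by (rule claim1)
      then have "m + 2 * t * Q2 f0 u + t^2 * Qf u \<le> m * (1 + 2 * t * ip f0 u + t^2 * Nf u)"
        unfolding Qf_expand Nf_expand m_def[symmetric] Nf0 .
      then show ?thesis by (simp add: algebra_simps)
    qed
    then have "Q2 f0 u - m * ip f0 u = 0" by (rule quad_nonpos_lin_zero)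
    then have "2 * (dg y * f0 y - (\<Sum>w\<in>V. adj y w * f0 w)) = m * (dg y * f0 y)"
      unfolding u_def Q2_delta[OF y] ip_delta[OF y] by simp
    then show "dg y * f0 y - (\<Sum>w\<in>V. adj y w * f0 w) = m / 2 * (dg y * f0 y)" by simp
  qed
  moreover have "\<exists>v\<in>V. f0 v \<noteq> 0"
  proof (rule ccontr)
    assume "\<not> ?thesis"
    then have "Nf f0 = 0" unfolding Nf_def by simp
    then show False using Nf0 by simp
  qed
  ultimately have "laplacian_eigenvalue V E (m/2)" by (rule EV_imp_eig)
  then show ?thesis using m0 claim1 by blast
qed

lemma ip_sym: "ip f g = ip g f"
  unfolding ip_def by (simp add: algebra_simps)

lemma Nf_ip: "Nf f = ip f f"
  unfolding Nf_def ip_def by (simp add: power2_eq_square algebra_simps)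

lemma EV_orth:
  assumes "EV mu f" "EV nu g" "mu \<noteq> nu"
  shows "ip f g = 0"
proof -
  define X where "X = (\<lambda>f g. \<Sum>v\<in>V. g v * (\<Sum>w\<in>V. adj v w * f w))"
  have gen: "ip f g - X f g = mu * ip f g" if "EV mu f" for mu f g
  proof -
    have "(\<Sum>v\<in>V. g v * (dg v * f v - (\<Sum>w\<in>V. adj v w * f w))) = (\<Sum>v\<in>V. g v * (mu * (dg v * f v)))"
      using that unfolding EV_def by (intro sum.cong) auto
    also have "\<dots> = mu * ip f g" unfolding ip_def by (simp add: sum_distrib_left algebra_simps)
    finally show ?thesis unfolding X_def ip_def by (simp add: algebra_simps sum_subtractf)
  qed
  have Xs: "X f g = X g f"
  proof -
    have "X f g = (\<Sum>v\<in>V. \<Sum>w\<in>V. adj v w * g v * f w)"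
      unfolding X_def by (simp add: sum_distrib_left algebra_simps)
    also have "\<dots> = (\<Sum>w\<in>V. \<Sum>v\<in>V. adj v w * g v * f w)" by (rule sum.swap)
    also have "\<dots> = X g f"
      unfolding X_def by (simp add: sum_distrib_left algebra_simps adj_sym)
    finally show ?thesis .
  qed
  have e1: "ip f g - X f g = mu * ip f g" using gen[OF assms(1)] .
  have "ip g f - X g f = nu * ip g f" using gen[OF assms(2)] .
  then have e2: "ip f g - X f g = nu * ip f g" by (simp only: Xs[symmetric] ip_sym[of g f])
  have "mu * ip f g = nu * ip f g" using e1 e2 by linarith
  then have "(mu - nu) * ip f g = 0" by (simp add: left_diff_distrib)
  then show ?thesis using assms(3) by simp
qed

lemma EV_scale: "EV mu f \<Longrightarrow> EV mu (\<lambda>v. c * f v)"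
proof -
  assume a: "EV mu f"
  show "EV mu (\<lambda>v. c * f v)" unfolding EV_def
  proof
    fix v assume v: "v \<in> V"
    have h: "dg v * f v - (\<Sum>w\<in>V. adj v w * f w) = mu * (dg v * f v)" using a v unfolding EV_def by blast
    have sm: "(\<Sum>w\<in>V. adj v w * (c * f w)) = c * (\<Sum>w\<in>V. adj v w * f w)"
      by (simp add: sum_distrib_left algebra_simps)
    have "dg v * (c * f v) - (\<Sum>w\<in>V. adj v w * (c * f w)) = c * (dg v * f v - (\<Sum>w\<in>V. adj v w * f w))"
      unfolding sm by (simp add: algebra_simps)
    also have "\<dots> = c * (mu * (dg v * f v))" by (simp only: h)
    also have "\<dots> = mu * (dg v * (c * f v))" by (simp add: algebra_simps)
    finally show "dg v * (c * f v) - (\<Sum>w\<in>V. adj v w * (c * f w)) = mu * (dg v * (c * f v))" .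
  qed
qed

lemma eig_normalized:
  assumes "laplacian_eigenvalue V E mu"
  shows "\<exists>f. EV mu f \<and> Nf f = 1"
proof -
  obtain f v where f: "EV mu f" "v \<in> V" "f v \<noteq> 0" using eig_imp_EV[OF assms] by blast
  have "Nf f \<noteq> 0" using Nf_zero f(2,3) by blast
  then have Np: "Nf f > 0" using Nf_nonneg[of f] by linarith
  define c where "c = 1 / sqrt (Nf f)"
  have "Nf (\<lambda>v. c * f v) = c^2 * Nf f" by (rule Nf_scale)
  also have "\<dots> = 1" unfolding c_def using Np by (simp add: power_divide)
  finally show ?thesis using EV_scale[OF f(1)] by blast
qed

lemma ip_sum_right: "finite F \<Longrightarrow> ip f (\<lambda>v. \<Sum>i\<in>F. c i * u i v) = (\<Sum>i\<in>F. c i * ip f (u i))"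
  unfolding ip_def by (simp add: sum_distrib_left sum.swap[of _ V] algebra_simps)

lemma Nf_diff: "Nf (\<lambda>v. a v - b v) = Nf a - 2 * ip a b + Nf b"
  unfolding Nf_def ip_def by (simp add: power2_eq_square algebra_simps sum.distrib sum_subtractf sum_distrib_left)

lemma bessel:
  assumes F: "finite F" and orth: "\<And>i j. i \<in> F \<Longrightarrow> j \<in> F \<Longrightarrow> ip (u i) (u j) = (if i = j then 1 else 0)"
  shows "card F \<le> card V"
proof -
  have pt: "(\<Sum>i\<in>F. dg x * (u i x)^2) \<le> 1" if x: "x \<in> V" for x
  proof -
    define ex where "ex = (\<lambda>v. if v = x then 1 else (0::real))"
    define c where "c = (\<lambda>i. dg x * u i x)"
    define b where "b = (\<lambda>v. \<Sum>i\<in>F. c i * u i v)"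
    have ipe: "ip ex g = dg x * g x" for g
    proof -
      have eq: "(\<lambda>v. dg v * ex v * g v) = (\<lambda>v. if v = x then dg x * g x else 0)"
        by (auto simp: ex_def)
      show ?thesis unfolding ip_def eq using finV x by (simp only: sum.delta if_True)
    qed
    have Ne: "Nf ex = dg x" using ipe[of ex] unfolding Nf_ip by (simp add: ex_def)
    have ieb: "ip ex b = (\<Sum>i\<in>F. (c i)^2)"
      unfolding b_def ip_sum_right[OF F] ipe c_def by (simp add: power2_eq_square)
    have ibu: "ip b (u j) = c j" if "j \<in> F" for j
    proof -
      have "ip b (u j) = ip (u j) b" by (rule ip_sym)
      also have "\<dots> = (\<Sum>i\<in>F. c i * ip (u j) (u i))" unfolding b_def by (rule ip_sum_right[OF F])
      also have "\<dots> = (\<Sum>i\<in>F. if i = j then c i else 0)"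
        using orth that by (intro sum.cong) auto
      also have "\<dots> = c j" using F that by (simp add: sum.delta')
      finally show ?thesis .
    qed
    have Nb: "Nf b = (\<Sum>i\<in>F. (c i)^2)"
    proof -
      have "Nf b = ip b b" by (rule Nf_ip)
      also have "\<dots> = (\<Sum>i\<in>F. c i * ip b (u i))" using ip_sum_right[OF F, of b c u, folded b_def] .
      also have "\<dots> = (\<Sum>i\<in>F. (c i)^2)" using ibu by (simp add: power2_eq_square)
      finally show ?thesis .
    qed
    have "0 \<le> Nf (\<lambda>v. ex v - b v)" by (rule Nf_nonneg)
    also have "\<dots> = dg x - (\<Sum>i\<in>F. (c i)^2)" unfolding Nf_diff Ne ieb Nb by simp
    finally have "(\<Sum>i\<in>F. (c i)^2) \<le> dg x" by simp
    then have "dg x * (\<Sum>i\<in>F. dg x * (u i x)^2) \<le> dg x * 1"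
      unfolding c_def by (simp add: sum_distrib_left power2_eq_square algebra_simps)
    then show ?thesis using dg_pos[OF x] by simp
  qed
  have "(\<Sum>x\<in>V. \<Sum>i\<in>F. dg x * (u i x)^2) \<le> (\<Sum>x\<in>V. 1)" by (rule sum_mono) (rule pt)
  also have "\<dots> = real (card V)" by simp
  finally have a: "(\<Sum>x\<in>V. \<Sum>i\<in>F. dg x * (u i x)^2) \<le> real (card V)" .
  have "(\<Sum>x\<in>V. \<Sum>i\<in>F. dg x * (u i x)^2) = (\<Sum>i\<in>F. Nf (u i))"
    unfolding Nf_def by (rule sum.swap)
  also have "\<dots> = (\<Sum>i\<in>F. 1)" using orth by (intro sum.cong) (auto simp: Nf_ip)
  also have "\<dots> = real (card F)" by simp
  finally show ?thesis using a by simp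
qed

lemma eig_finite: "finite {mu. laplacian_eigenvalue V E mu}"
proof (rule ccontr)
  assume "infinite {mu. laplacian_eigenvalue V E mu}"
  then obtain F where F: "finite F" "card F = Suc (card V)" "F \<subseteq> {mu. laplacian_eigenvalue V E mu}"
    using infinite_arbitrarily_large by blast
  have "\<forall>mu\<in>F. \<exists>f. EV mu f \<and> Nf f = 1" using F(3) eig_normalized by blast
  then obtain u where u: "\<And>mu. mu \<in> F \<Longrightarrow> EV mu (u mu) \<and> Nf (u mu) = 1" by metis
  have "ip (u i) (u j) = (if i = j then 1 else 0)" if "i \<in> F" "j \<in> F" for i j
  proof (cases "i = j")
    case True then show ?thesis using u that by (simp add: Nf_ip)
  next
    case False then show ?thesis using u[OF that(1)] u[OF that(2)] EV_orth[of i "u i" j "u j"] by simp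
  qed
  then have "card F \<le> card V" using bessel[OF F(1)] by blast
  then show False using F(2) by simp
qed

lemma rayleigh_lambda:
  assumes "V \<noteq> {}"
  shows "(\<forall>g. Qf g \<le> 2 * lambda_max V E * Nf g) \<and> lambda_max V E \<ge> 0"
proof -
  obtain m where m: "laplacian_eigenvalue V E (m/2)" "m \<ge> 0" "\<And>g. Qf g \<le> m * Nf g"
    using rayleigh_max[OF assms] by blast
  have "m/2 \<le> lambda_max V E" unfolding lambda_max_def
    using eig_finite m(1) by (intro Max_ge) auto
  then have l: "m \<le> 2 * lambda_max V E" by simp
  have "Qf g \<le> 2 * lambda_max V E * Nf g" for g
    using m(3)[of g] mult_right_mono[OF l Nf_nonneg[of g]] by linarith
  then show ?thesis using l m(2) by auto
qed

definition vol where "vol = (\<Sum>v\<in>V. dg v)"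

lemma avg_vol: "avg_deg V E = vol / real (card V)"
  unfolding avg_deg_def vol_def dg_def by simp

lemma vol_pos: "V \<noteq> {} \<Longrightarrow> vol > 0"
proof -
  assume "V \<noteq> {}"
  then obtain x where x: "x \<in> V" by blast
  have "dg x \<le> vol" unfolding vol_def using x finV dg_pos by (intro member_le_sum) (auto simp: dg_def)
  then show ?thesis using dg_pos[OF x] by linarith
qed

lemma sq_sum_ge:
  fixes x :: "nat \<Rightarrow> real"
  assumes "finite I" "I \<noteq> {}"
  shows "(\<Sum>i\<in>I. x i)^2 / real (card I) \<le> (\<Sum>i\<in>I. (x i)^2)"
proof -
  define n where "n = real (card I)"
  define S where "S = (\<Sum>i\<in>I. x i)"
  have n: "n > 0" unfolding n_def using assms by (simp add: card_gt_0_iff)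
  have "0 \<le> (\<Sum>i\<in>I. (x i - S / n)^2)" by (intro sum_nonneg) simp
  also have "\<dots> = (\<Sum>i\<in>I. (x i)^2 - (2 * (S / n)) * x i + (S/n)^2)"
    by (intro sum.cong refl) (simp add: power2_eq_square algebra_simps)
  also have "\<dots> = (\<Sum>i\<in>I. (x i)^2) - (2 * (S / n)) * S + n * (S/n)^2"
    unfolding S_def n_def by (simp add: sum.distrib sum_subtractf sum_distrib_left)
  also have "\<dots> = (\<Sum>i\<in>I. (x i)^2) - S^2 / n"
    using n by (simp add: power2_eq_square field_simps)
  finally show ?thesis unfolding S_def n_def by simp
qed

lemma coloring_bound:
  assumes Vne: "V \<noteq> {}" and col: "improper_coloring V E d k c"
  shows "lambda_max V E \<le> real k * (lambda_max V E - 1 + real d / avg_deg V E)" and "k \<ge> 1"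
proof -
  define lam where "lam = lambda_max V E"
  have cr: "c v \<in> {1..k}" if "v \<in> V" for v using col that unfolding improper_coloring_def by blast
  have sd: "card {w \<in> V. E v w \<and> c w = c v} \<le> d" if "v \<in> V" for v
    using col that unfolding improper_coloring_def by blast
  show k1: "k \<ge> 1" using cr Vne by fastforce
  define I where "I = {1..k}"
  have I: "finite I" "I \<noteq> {}" "card I = k" using k1 unfolding I_def by auto
  define ind where "ind = (\<lambda>i v. if c v = i then 1 else (0::real))"
  define voli where "voli = (\<lambda>i. \<Sum>v\<in>V. dg v * ind i v)"
  define p where "p = (\<lambda>i. voli i / vol)"
  define g where "g = (\<lambda>i v. ind i v - p i)"
  have vp: "vol > 0" using vol_pos[OF Vne] .
  have RL: "\<forall>g. Qf g \<le> 2 * lam * Nf g" "lam \<ge> 0" using rayleigh_lambda[OF Vne] unfolding lam_def by auto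
  have pair: "(\<Sum>i\<in>I. (ind i v - ind i w)^2) = 2 - 2 * (if c w = c v then 1 else 0)"
    if "v \<in> V" "w \<in> V" for v w
  proof (cases "c w = c v")
    case True then show ?thesis unfolding ind_def by simp
  next
    case False
    have "(ind i v - ind i w)^2 = (if c v = i then 1 else 0) + (if c w = i then 1 else 0)" for i
      using False unfolding ind_def by auto
    then have "(\<Sum>i\<in>I. (ind i v - ind i w)^2) = (\<Sum>i\<in>I. (if c v = i then 1 else 0)) + (\<Sum>i\<in>I. (if c w = i then 1 else (0::real)))"
      by (simp add: sum.distrib)
    also have "\<dots> = 2" using cr[OF that(1)] cr[OF that(2)] I(1) unfolding I_def by (simp add: sum.delta)
    finally show ?thesis using False by simp
  qed
  have Qg: "Qf (g i) = (\<Sum>v\<in>V. \<Sum>w\<in>V. adj v w * (ind i v - ind i w)^2)" for i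
    unfolding Qf_def g_def by simp
  have "(\<Sum>i\<in>I. Qf (g i)) = (\<Sum>v\<in>V. \<Sum>w\<in>V. adj v w * (\<Sum>i\<in>I. (ind i v - ind i w)^2))"
    unfolding Qg by (simp add: sum_distrib_left sum.swap[of _ I])
  also have "\<dots> = (\<Sum>v\<in>V. \<Sum>w\<in>V. adj v w * (2 - 2 * (if c w = c v then 1 else 0)))"
    using pair by (intro sum.cong refl) simp
  also have "\<dots> = (\<Sum>v\<in>V. 2 * (\<Sum>w\<in>V. adj v w) - 2 * (\<Sum>w\<in>V. adj v w * (if c w = c v then 1 else 0)))"
    by (simp add: algebra_simps sum_subtractf sum_distrib_left)
  also have "\<dots> = (\<Sum>v\<in>V. 2 * dg v - 2 * real (card {w \<in> V. E v w \<and> c w = c v}))"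
  proof (intro sum.cong refl)
    fix v assume v: "v \<in> V"
    have "(\<Sum>w\<in>V. adj v w * (if c w = c v then 1 else 0)) = (\<Sum>w\<in>{w \<in> V. E v w \<and> c w = c v}. 1)"
    proof -
      have "\<And>w. adj v w * (if c w = c v then 1 else 0) = (if E v w \<and> c w = c v then 1 else (0::real))"
        by (simp add: adj_def)
      then show ?thesis using finV by (simp add: sum.If_cases Int_def)
    qed
    then show "2 * (\<Sum>w\<in>V. adj v w) - 2 * (\<Sum>w\<in>V. adj v w * (if c w = c v then 1 else 0))
          = 2 * dg v - 2 * real (card {w \<in> V. E v w \<and> c w = c v})"
      using dg_sum[OF v] by simp
  qed
  also have "\<dots> \<ge> (\<Sum>v\<in>V. 2 * dg v - 2 * real d)"
    using sd by (intro sum_mono) simp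
  finally have num: "2 * vol - 2 * real (card V) * real d \<le> (\<Sum>i\<in>I. Qf (g i))"
    unfolding vol_def by (simp add: sum_subtractf sum_distrib_left)
  have Ng: "Nf (g i) = voli i - (voli i)^2 / vol" for i
  proof -
    have "Nf (g i) = (\<Sum>v\<in>V. dg v * ind i v * (1 - 2 * p i) + (p i)^2 * dg v)"
      unfolding Nf_def g_def by (intro sum.cong refl) (simp add: ind_def power2_eq_square algebra_simps)
    also have "\<dots> = voli i * (1 - 2 * p i) + (p i)^2 * vol"
      unfolding voli_def vol_def by (simp add: sum.distrib sum_distrib_left sum_distrib_right)
    also have "\<dots> = voli i - (voli i)^2 / vol"
      unfolding p_def using vp by (simp add: power2_eq_square field_simps)
    finally show ?thesis .
  qed
  have svol: "(\<Sum>i\<in>I. voli i) = vol"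
  proof -
    have "(\<Sum>i\<in>I. voli i) = (\<Sum>v\<in>V. dg v * (\<Sum>i\<in>I. ind i v))"
      unfolding voli_def by (simp add: sum.swap[of _ I] sum_distrib_left)
    also have "\<dots> = (\<Sum>v\<in>V. dg v)"
      using cr I(1) unfolding ind_def I_def by (intro sum.cong refl) (simp add: sum.delta)
    finally show ?thesis unfolding vol_def .
  qed
  have "vol^2 / real k \<le> (\<Sum>i\<in>I. (voli i)^2)"
    using sq_sum_ge[OF I(1) I(2), of voli] svol I(3) by simp
  then have "vol / real k \<le> (\<Sum>i\<in>I. (voli i)^2) / vol"
    using vp by (simp add: field_simps power2_eq_square)
  moreover have "(\<Sum>i\<in>I. Nf (g i)) = vol - (\<Sum>i\<in>I. (voli i)^2) / vol"
    unfolding Ng by (simp add: sum_subtractf svol sum_divide_distrib)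
  ultimately have den: "(\<Sum>i\<in>I. Nf (g i)) \<le> vol - vol / real k" by linarith
  have "(\<Sum>i\<in>I. Qf (g i)) \<le> (\<Sum>i\<in>I. 2 * lam * Nf (g i))"
    using RL(1) by (intro sum_mono) blast
  also have "\<dots> = 2 * lam * (\<Sum>i\<in>I. Nf (g i))" by (simp add: sum_distrib_left)
  also have "\<dots> \<le> 2 * lam * (vol - vol / real k)"
    using den RL(2) by (intro mult_left_mono) auto
  finally have key: "vol - real (card V) * real d \<le> lam * (vol - vol / real k)"
    using num by linarith
  define n where "n = real (card V)"
  define al where "al = avg_deg V E"
  have np: "n > 0" unfolding n_def using Vne finV by (simp add: card_gt_0_iff)
  have volal: "vol = n * al" unfolding al_def n_def avg_vol using np n_def by simp
  have alp: "al > 0" using vp volal np by (simp add: zero_less_mult_iff)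
  have kp: "real k > 0" using k1 by simp
  have "n * (al - real d) \<le> n * (lam * al * (1 - 1 / real k))"
    using key unfolding volal n_def[symmetric] by (simp add: algebra_simps)
  then have "al - real d \<le> lam * al * (1 - 1 / real k)" using np by simp
  then have h1: "real k * (al - real d) \<le> real k * (lam * al * (1 - 1 / real k))"
    using kp by (simp only: mult_le_cancel_left_pos)
  have e1: "real k * (lam * al * (1 - 1 / real k)) = real k * lam * al - lam * al"
    using kp by (simp add: field_simps)
  have e2: "real k * (al - real d) = real k * al - real k * real d"
    by (simp add: right_diff_distrib)
  have e3: "real k * (lam - 1 + real d / al) * al = real k * lam * al - real k * al + real k * real d"
    using alp by (simp add: field_simps)
  have "lam * al \<le> real k * (lam - 1 + real d / al) * al"
    using h1 unfolding e1 e2 e3 by linarith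
  then have "lam \<le> real k * (lam - 1 + real d / al)" using alp by simp
  then show "lambda_max V E \<le> real k * (lambda_max V E - 1 + real d / avg_deg V E)"
    unfolding lam_def al_def .
qed

end

lemma coloring_exists:
  assumes "simple_graph V E"
  shows "\<exists>c. improper_coloring V E d (improper_chromatic V E d) c"
proof -
  have fin: "finite V" and irr: "\<And>v. \<not> E v v" using assms by (auto simp: simple_graph_def)
  obtain h where h: "bij_betw h V {0..<card V}" using ex_bij_betw_finite_nat[OF fin] by blast
  define c where "c = (\<lambda>v. h v + 1)"
  have "improper_coloring V E d (card V) c" unfolding improper_coloring_def
  proof (intro conjI ballI)
    fix v assume v: "v \<in> V"
    have "h v < card V" using h v unfolding bij_betw_def by auto
    then show "c v \<in> {1..card V}" unfolding c_def by simp
    have emp: "{w \<in> V. E v w \<and> c w = c v} = {}"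
    proof (rule ccontr)
      assume "{w \<in> V. E v w \<and> c w = c v} \<noteq> {}"
      then obtain w where w: "w \<in> V" "E v w" "c w = c v" by blast
      then have "h w = h v" unfolding c_def by simp
      then have "w = v" using h v w(1) unfolding bij_betw_def inj_on_def by blast
      then show False using w(2) irr by simp
    qed
    show "card {w \<in> V. E v w \<and> c w = c v} \<le> d" unfolding emp by simp
  qed
  then have "\<exists>k c. improper_coloring V E d k c" by blast
  then show ?thesis unfolding improper_chromatic_def by (rule LeastI_ex)
qed

lemma lower_bound:
  assumes "simple_graph V E" and "has_edge V E" and "no_isolated V E"
  shows "real (improper_chromatic V E d)
           \<ge> lambda_max V E / (lambda_max V E - 1 + real d / avg_deg V E)"
proof -
  interpret sgraph V E using assms by unfold_locales auto
  have Vne: "V \<noteq> {}" using assms(2) unfolding has_edge_def by blast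
  obtain c where c: "improper_coloring V E d (improper_chromatic V E d) c"
    using coloring_exists[OF assms(1)] by blast
  define k where "k = real (improper_chromatic V E d)"
  define D where "D = lambda_max V E - 1 + real d / avg_deg V E"
  have b: "lambda_max V E \<le> k * D" using coloring_bound(1)[OF Vne c] unfolding k_def D_def .
  have l0: "lambda_max V E \<ge> 0" using rayleigh_lambda[OF Vne] by blast
  have k0: "k \<ge> 0" unfolding k_def by simp
  have "lambda_max V E / D \<le> k"
  proof (cases "D > 0")
    case True then show ?thesis using b by (simp add: pos_divide_le_eq)
  next
    case False
    then have "lambda_max V E / D \<le> 0" using l0 by (simp add: divide_nonneg_nonpos)
    then show ?thesis using k0 by linarith
  qed
  then show ?thesis unfolding k_def D_def .
qed

definition K2V :: "nat set" where "K2V = {0, 1}"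
definition K2E :: "nat \<Rightarrow> nat \<Rightarrow> bool" where "K2E v w \<longleftrightarrow> (v = 0 \<and> w = 1) \<or> (v = 1 \<and> w = 0)"

lemma K2_simple: "simple_graph K2V K2E"
  unfolding simple_graph_def K2V_def K2E_def by auto

lemma sum01: "S = {0, 1::nat} \<Longrightarrow> (\<Sum>v\<in>S. g v) = g 0 + (g 1 :: real)"
  by simp

lemma K2_nb0: "neighbours K2V K2E 0 = {1}" unfolding neighbours_def K2V_def K2E_def by auto
lemma K2_nb1: "neighbours K2V K2E 1 = {0}" unfolding neighbours_def K2V_def K2E_def by auto

lemma K2_deg0: "gdeg K2V K2E 0 = 1" unfolding gdeg_def K2_nb0 by simp
lemma K2_deg1: "gdeg K2V K2E 1 = 1" unfolding gdeg_def K2_nb1 by simp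

lemma K2_deg: "v \<in> K2V \<Longrightarrow> gdeg K2V K2E v = 1"
proof -
  assume "v \<in> K2V"
  then have "v = 0 \<or> v = 1" unfolding K2V_def by blast
  then show ?thesis using K2_deg0 K2_deg1 by blast
qed

lemma K2_edge: "has_edge K2V K2E" unfolding has_edge_def K2V_def K2E_def by blast

lemma K2_noiso: "no_isolated K2V K2E" unfolding no_isolated_def using K2_deg by simp

lemma K2_card: "card K2V = 2" unfolding K2V_def by simp

lemma K2_avg: "avg_deg K2V K2E = 1"
proof -
  have "(\<Sum>v\<in>K2V. real (gdeg K2V K2E v)) = real (gdeg K2V K2E 0) + real (gdeg K2V K2E 1)"
    by (rule sum01) (simp add: K2V_def)
  then show ?thesis unfolding avg_deg_def K2_card K2_deg0 K2_deg1 by simp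
qed

lemma K2_lap0: "norm_laplacian K2V K2E f 0 = f 0 - f 1"
proof -
  have "(\<Sum>w\<in>K2V. (if K2E 0 w then 1 else 0) * f w) = (if K2E 0 0 then 1 else 0) * f 0 + (if K2E 0 1 then 1 else 0) * f 1"
    by (rule sum01) (simp add: K2V_def)
  also have "\<dots> = f 1" by (simp add: K2E_def)
  finally show ?thesis unfolding norm_laplacian_def K2_deg0 by simp
qed

lemma K2_lap1: "norm_laplacian K2V K2E f 1 = f 1 - f 0"
proof -
  have "(\<Sum>w\<in>K2V. (if K2E 1 w then 1 else 0) * f w) = (if K2E 1 0 then 1 else 0) * f 0 + (if K2E 1 1 then 1 else 0) * f 1"
    by (rule sum01) (simp add: K2V_def)
  also have "\<dots> = f 0" by (simp add: K2E_def)
  finally show ?thesis unfolding norm_laplacian_def K2_deg1 by simp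
qed

lemma K2_lambda: "lambda_max K2V K2E = 2"
proof -
  let ?M = "{mu. laplacian_eigenvalue K2V K2E mu}"
  have sub: "?M \<subseteq> {0, 2}"
  proof
    fix mu assume "mu \<in> ?M"
    then obtain f where f: "\<exists>v\<in>K2V. f v \<noteq> 0" "\<forall>v\<in>K2V. norm_laplacian K2V K2E f v = mu * f v"
      unfolding laplacian_eigenvalue_def by blast
    have i0: "(0::nat) \<in> K2V" and i1: "(1::nat) \<in> K2V" by (simp_all add: K2V_def)
    have h0: "norm_laplacian K2V K2E f 0 = mu * f 0" using f(2) i0 by blast
    have h1: "norm_laplacian K2V K2E f 1 = mu * f 1" using f(2) i1 by blast
    have e0: "f 0 - f 1 = mu * f 0" using h0 unfolding K2_lap0 .
    have e1: "f 1 - f 0 = mu * f 1" using h1 unfolding K2_lap1 .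
    obtain v where v: "v \<in> K2V" "f v \<noteq> 0" using f(1) by blast
    have "v = 0 \<or> v = 1" using v(1) unfolding K2V_def by blast
    then have nz: "f 0 \<noteq> 0 \<or> f 1 \<noteq> 0" using v(2) by blast
    have dd: "mu * (f 0 + f 1) = mu * f 0 + mu * f 1" by (simp add: distrib_left)
    have m0: "mu * (f 0 + f 1) = 0" using e0 e1 dd by linarith
    show "mu \<in> {0, 2}"
    proof (cases "mu = 0")
      case False
      have "f 0 + f 1 = 0" using m0 \<open>mu \<noteq> 0\<close> by simp
      then have f1: "f 1 = - f 0" by linarith
      have "f 0 \<noteq> 0" using nz f1 by force
      have "2 * f 0 = mu * f 0" using e0 f1 by linarith
      then have "mu = 2" using \<open>f 0 \<noteq> 0\<close> by simp
      then show ?thesis by simp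
    qed simp
  qed
  have "laplacian_eigenvalue K2V K2E 2"
    unfolding laplacian_eigenvalue_def
  proof (rule exI[of _ "\<lambda>v. if v = 0 then 1 else -1"], intro conjI ballI)
    show "\<exists>v\<in>K2V. (if v = 0 then 1 else -1::real) \<noteq> 0" by (auto simp: K2V_def)
    fix v assume "v \<in> K2V"
    then have "v = 0 \<or> v = 1" by (auto simp: K2V_def)
    then show "norm_laplacian K2V K2E (\<lambda>v. if v = 0 then 1 else -1) v = 2 * (if v = 0 then 1 else -1)"
      by (auto simp only: K2_lap0 K2_lap1) simp_all
  qed
  then have "2 \<in> ?M" by simp
  moreover have "finite ?M" using sub finite_subset by blast
  ultimately show ?thesis unfolding lambda_max_def using sub
    by (intro Max_eqI) auto
qed

lemma K2_chi: "improper_chromatic K2V K2E 1 = 1"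
  unfolding improper_chromatic_def
proof (rule Least_equality)
  have "improper_coloring K2V K2E 1 1 (\<lambda>_. 1)"
    unfolding improper_coloring_def
  proof (intro conjI ballI)
    fix v assume v: "v \<in> K2V"
    show "(1::nat) \<in> {1..1}" by simp
    have "{w \<in> K2V. K2E v w \<and> (1::nat) = 1} = neighbours K2V K2E v" unfolding neighbours_def by simp
    then show "card {w \<in> K2V. K2E v w \<and> (1::nat) = 1} \<le> 1" using K2_deg[OF v] by (simp add: gdeg_def)
  qed
  then show "\<exists>c. improper_coloring K2V K2E 1 1 c" by blast
next
  fix y assume "\<exists>c. improper_coloring K2V K2E 1 y c"
  then obtain c where "improper_coloring K2V K2E 1 y c" by blast
  then have "c 0 \<in> {1..y}" unfolding improper_coloring_def K2V_def by simp
  then show "1 \<le> y" by simp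
qed


theorem mainTheorem13:
  fixes V :: "'a set" and E :: "'a \<Rightarrow> 'a \<Rightarrow> bool" and d :: nat
  assumes "simple_graph V E" and "has_edge V E" and "no_isolated V E"
  shows "real (improper_chromatic V E d)
           \<ge> lambda_max V E / (lambda_max V E - 1 + real d / avg_deg V E)
       \<and> (\<exists>(V' :: nat set) E' (d' :: nat). simple_graph V' E' \<and> has_edge V' E' \<and> no_isolated V' E'
            \<and> real (improper_chromatic V' E' d')
                = lambda_max V' E' / (lambda_max V' E' - 1 + real d' / avg_deg V' E'))"
proof
  show "real (improper_chromatic V E d)
           \<ge> lambda_max V E / (lambda_max V E - 1 + real d / avg_deg V E)"
    by (rule lower_bound[OF assms])
  have "simple_graph K2V K2E \<and> has_edge K2V K2E \<and> no_isolated K2V K2E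
            \<and> real (improper_chromatic K2V K2E 1)
                = lambda_max K2V K2E / (lambda_max K2V K2E - 1 + real 1 / avg_deg K2V K2E)"
  proof -
    have c: "real (improper_chromatic K2V K2E 1) = 1" by (simp only: K2_chi)
    have r: "lambda_max K2V K2E / (lambda_max K2V K2E - 1 + real 1 / avg_deg K2V K2E) = 1"
      by (simp add: K2_lambda K2_avg)
    show ?thesis unfolding c r using K2_simple K2_edge K2_noiso by simp
  qed
  then show "\<exists>(V' :: nat set) E' (d' :: nat). simple_graph V' E' \<and> has_edge V' E' \<and> no_isolated V' E'
            \<and> real (improper_chromatic V' E' d')
                = lambda_max V' E' / (lambda_max V' E' - 1 + real d' / avg_deg V' E')"
    by blast
qed

end
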